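(* For every cv-cycle type $\check{\lambda}$ and every integer $k\ge0$, the cv-cycle type colored Eulerian quasisymmetric function $Q_{\check{\lambda},k}$ is a symmetric function, i.e., it is invariant under every permutation of the variables $x_1,x_2,\dots$.
   Context: Fix a positive integer $l$ and commuting indeterminates $x_1,x_2,\dots$. Let $\mathcal{B}$ be the alphabet consisting of the letters $u^m$ ($u\ge1$, $0\le m\le l-1$) and the barred letters $\overline{u^0}$ ($u\ge1$). $u^m$ is $m$-colored and $\overline{u^0}$ is $0$-colored; both have absolute value $u$ and weight $x_u$. A colored necklace is a circular word over $\mathcal{B}$ (up to rotation, read clockwise) which is primitive (not a concatenation of $\ge2$ copies of a proper subword) and satisfies: (1) every barred letter is followed by a letter of lesser or equal absolute value; (2) every $0$-colored unbarred letter is followed by a letter of greater or equal absolute value; (3) a necklace of length one is not a single barred letter. A colored ornament is a finite multiset of colored necklaces, with weight the product of the weights of its letters. The color vector of a word or necklace is $(\beta_1,\dots,\beta_{l-1})$, where $\beta_m$ is the number of $m$-colored letters ($m\ge1$). A cv-cycle type is a finite multiset $\check{\lambda}=\{(\lambda_1,\vec{\beta^1}),\dots,(\lambda_i,\vec{\beta^i})\}$ with $\lambda_1\ge\dots\ge\lambda_i\ge1$ and $\vec{\beta^j}\in\mathbb{N}^{l-1}$; the cv-cycle type of an ornament is the multiset of pairs (length, color vector) of its necklaces. $Q_{\check{\lambda},k}$ is the sum of the weights of all colored ornaments of cv-cycle type $\check{\lambda}$ having exactly $k$ barred letters. (By Hyatt's colored ornament interpretation this coincides with the paper's definition $Q_{\check{\lambda},k}=\sum_\pi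 F_{n,\mathrm{DEX}(\pi)}$ over colored permutations of cv-cycle type $\check\lambda$ with $k$ excedances.) *)

theory Defs
  imports Main "HOL-Library.Multiset"
begin

type_synonym letter = "nat \<times> nat \<times> bool"

definition absv :: "letter \<Rightarrow> nat" where "absv a = fst a"
definition colr :: "letter \<Rightarrow> nat" where "colr a = fst (snd a)"
definition barred :: "letter \<Rightarrow> bool" where "barred a = snd (snd a)"

definition valid_letter :: "nat \<Rightarrow> letter \<Rightarrow> bool" where
  "valid_letter l a \<longleftrightarrow> absv a \<ge> 1 \<and> colr a < l \<and> (barred a \<longrightarrow> colr a = 0)"

definition primitive_word :: "'a list \<Rightarrow> bool" where
  "primitive_word w \<longleftrightarrow> w \<noteq> [] \<and> \<not> (\<exists>v d. d \<ge> 2 \<and> w = concat (replicate d v))"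

text \<open>Circular successor conditions (1)-(3) of a colored necklace, read on a representative word.\<close>
definition necklace_word :: "nat \<Rightarrow> letter list \<Rightarrow> bool" where
  "necklace_word l w \<longleftrightarrow>
     primitive_word w \<and> (\<forall>a\<in>set w. valid_letter l a) \<and>
     (\<forall>i<length w.
        (barred (w ! i) \<longrightarrow> absv (w ! ((i + 1) mod length w)) \<le> absv (w ! i)) \<and>
        (colr (w ! i) = 0 \<and> \<not> barred (w ! i) \<longrightarrow>
            absv (w ! i) \<le> absv (w ! ((i + 1) mod length w)))) \<and>
     (length w = 1 \<longrightarrow> \<not> barred (hd w))"

definition rot_class :: "'a list \<Rightarrow> 'a list set" where
  "rot_class w = {rotate i w | i. True}"

definition is_necklace :: "nat \<Rightarrow> letter list set \<Rightarrow> bool" where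
  "is_necklace l N \<longleftrightarrow> (\<exists>w. necklace_word l w \<and> N = rot_class w)"

definition rep :: "letter list set \<Rightarrow> letter list" where
  "rep N = (SOME w. w \<in> N)"

definition colvec :: "nat \<Rightarrow> letter list \<Rightarrow> nat list" where
  "colvec l w = map (\<lambda>m. length (filter (\<lambda>a. colr a = m) w)) [1..<l]"

definition ornament :: "nat \<Rightarrow> letter list set multiset \<Rightarrow> bool" where
  "ornament l Om \<longleftrightarrow> (\<forall>N\<in>#Om. is_necklace l N)"

definition cv_type :: "nat \<Rightarrow> letter list set multiset \<Rightarrow> (nat \<times> nat list) multiset" where
  "cv_type l Om = image_mset (\<lambda>N. (length (rep N), colvec l (rep N))) Om"

definition num_barred :: "letter list set multiset \<Rightarrow> nat" where
  "num_barred Om = sum_mset (image_mset (\<lambda>N. length (filter barred (rep N))) Om)"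

text \<open>Exponent vector of the weight: x_u appears with exponent content Om u.\<close>
definition content :: "letter list set multiset \<Rightarrow> nat \<Rightarrow> nat" where
  "content Om u = sum_mset (image_mset (\<lambda>N. length (filter (\<lambda>a. absv a = u) (rep N))) Om)"

text \<open>Coefficient of the monomial prod_u x_u^(alpha u) in Q_{lambda,k}.\<close>
definition Q_coeff :: "nat \<Rightarrow> (nat \<times> nat list) multiset \<Rightarrow> nat \<Rightarrow> (nat \<Rightarrow> nat) \<Rightarrow> nat" where
  "Q_coeff l lam k \<alpha> =
     card {Om. ornament l Om \<and> cv_type l Om = lam \<and> num_barred Om = k \<and> content Om = \<alpha>}"

end

theory Submission
  imports Defs
begin


definition act :: "nat \<Rightarrow> letter \<Rightarrow> bool" where
  "act i a \<longleftrightarrow> absv a = i \<or> absv a = Suc i"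
definition linkp :: "nat \<Rightarrow> letter \<Rightarrow> letter \<Rightarrow> bool" where
  "linkp i a b \<longleftrightarrow> act i a \<and> colr a = 0 \<and> act i b"
definition sw :: "nat \<Rightarrow> nat \<Rightarrow> nat \<Rightarrow> nat" where
  "sw a b x = (if x = a then b else if x = b then a else x)"
definition flip :: "nat \<Rightarrow> nat \<Rightarrow> nat" where
  "flip i = sw i (Suc i)"
definition RR :: "letter \<Rightarrow> letter \<Rightarrow> bool" where
  "RR a b \<longleftrightarrow> (barred a \<longrightarrow> absv b \<le> absv a) \<and> (colr a = 0 \<and> \<not> barred a \<longrightarrow> absv a \<le> absv b)"

definition T :: "nat \<Rightarrow> letter list \<Rightarrow> letter list" where
  "T i c = zip (map (flip i) (rev (map absv c)))
             (zip (map colr c) (rev (butlast (map barred c)) @ [last (map barred c)]))"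

fun segs :: "nat \<Rightarrow> letter list \<Rightarrow> letter list list" where
  "segs i [] = []"
| "segs i [x] = [[x]]"
| "segs i (x # y # zs) = (if linkp i x y then (case segs i (y # zs) of s # ss \<Rightarrow> (x # s) # ss | [] \<Rightarrow> [[x]])
      else [x] # segs i (y # zs))"

definition phi :: "nat \<Rightarrow> letter list \<Rightarrow> letter list" where
  "phi i x = concat (map (T i) (segs i x))"

definition alllink :: "nat \<Rightarrow> letter list \<Rightarrow> bool" where
  "alllink i x \<longleftrightarrow> (\<forall>a\<in>set x. act i a \<and> colr a = 0)"

definition good :: "nat \<Rightarrow> letter list \<Rightarrow> bool" where
  "good i x \<longleftrightarrow> x \<noteq> [] \<and> (\<not> linkp i (last x) (hd x) \<or> alllink i x)"

definition seg_ok :: "nat \<Rightarrow> letter list list \<Rightarrow> bool" where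
  "seg_ok i ss \<longleftrightarrow> (\<forall>s\<in>set ss. s \<noteq> [] \<and> successively (linkp i) s) \<and>
      successively (\<lambda>s t. \<not> linkp i (last s) (hd t)) ss"

lemma flip_flip[simp]: "flip i (flip i x) = x"
  by (simp add: flip_def sw_def)

lemma flip_eq_iff: "flip i v = u \<longleftrightarrow> v = flip i u"
  by (auto simp: flip_def sw_def)

lemma act_flip: "(flip i v = i \<or> flip i v = Suc i) \<longleftrightarrow> (v = i \<or> v = Suc i)"
  by (auto simp: flip_def sw_def)

lemma flip_inact: "\<not> (v = i \<or> v = Suc i) \<Longrightarrow> flip i v = v"
  by (auto simp: flip_def sw_def)

lemma zip3_maps:
  assumes "length vs = length cs" "length cs = length bs"
  shows "map absv (zip vs (zip cs bs)) = vs" "map colr (zip vs (zip cs bs)) = cs"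
        "map barred (zip vs (zip cs bs)) = bs"
  using assms
  by (induction vs cs bs rule: list_induct3) (auto simp: absv_def colr_def barred_def)

lemma zip3_id: "zip (map absv c) (zip (map colr c) (map barred c)) = c"
  by (induction c) (auto simp: absv_def colr_def barred_def)

lemma length_T[simp]: "length (T i c) = length c"
  by (cases "c = []") (auto simp: T_def)

lemma T_nth: assumes "j < length c"
  shows "T i c ! j = (flip i (absv (c ! (length c - 1 - j))), colr (c ! j),
           (if j < length c - 1 then barred (c ! (length c - 2 - j)) else barred (c ! (length c - 1))))"
proof -
  have hc: "c \<noteq> []" using assms by auto
  have "last (map barred c) = barred (c ! (length c - 1))" using hc by (simp add: last_map last_conv_nth)
  then show ?thesis using assms
    by (auto simp: T_def rev_nth nth_append nth_butlast)
qed

lemma map_colr_T: "map colr (T i c) = map colr c"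
  by (cases "c = []") (auto simp: T_def intro!: zip3_maps)

lemma map_absv_T: "map absv (T i c) = map (flip i) (rev (map absv c))"
  by (cases "c = []") (auto simp: T_def intro!: zip3_maps)

lemma map_barred_T: "c \<noteq> [] \<Longrightarrow> map barred (T i c) = rev (butlast (map barred c)) @ [last (map barred c)]"
  by (auto simp: T_def intro!: zip3_maps)

lemma T_T: "c \<noteq> [] \<Longrightarrow> T i (T i c) = c"
proof -
  assume c: "c \<noteq> []"
  have tc: "T i c \<noteq> []" using c by (metis length_T length_0_conv)
  have "map barred (T i (T i c)) = map barred c"
    unfolding map_barred_T[OF tc] map_barred_T[OF c]
    using c by (simp add: butlast_append last_map) (metis append_butlast_last_id last_map map_butlast map_is_Nil_conv)
  moreover have "map absv (T i (T i c)) = map absv c"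
    unfolding map_absv_T by (simp add: rev_map)
  moreover have "map colr (T i (T i c)) = map colr c" by (simp add: map_colr_T)
  ultimately show ?thesis by (metis zip3_id)
qed


lemma segs_concat[simp]: "concat (segs i x) = x"
proof (induction i x rule: segs.induct)
  case (3 i x y zs)
  show ?case
  proof (cases "linkp i x y")
    case True
    then show ?thesis using 3 by (cases "segs i (y # zs)") auto
  qed (use 3 in auto)
qed auto

lemma segs_ok: "seg_ok i (segs i x)"
proof (induction i x rule: segs.induct)
  case (3 i x y zs)
  have cc: "concat (segs i (y # zs)) = y # zs" by simp
  show ?case
  proof (cases "linkp i x y")
    case True
    then obtain s ss where e: "segs i (y # zs) = s # ss"
      using cc by (cases "segs i (y # zs)") auto
    have ok: "seg_ok i (s # ss)" using 3 True e by simp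
    then have sne: "s \<noteq> []" by (simp add: seg_ok_def)
    have hs: "hd s = y" using cc e sne by (cases s) auto
    show ?thesis using True e ok sne hs
      by (auto simp: seg_ok_def successively_Cons)
  next
    case False
    obtain s ss where e: "segs i (y # zs) = s # ss"
      using cc by (cases "segs i (y # zs)") auto
    have ok: "seg_ok i (s # ss)" using 3 False e by simp
    then have sne: "s \<noteq> []" by (simp add: seg_ok_def)
    have hs: "hd s = y" using cc e sne by (cases s) auto
    show ?thesis using False e ok sne hs
      by (auto simp: seg_ok_def successively_Cons)
  qed
qed (auto simp: seg_ok_def)

lemma segs_ne: "s \<in> set (segs i x) \<Longrightarrow> s \<noteq> []"
  using segs_ok[of i x] by (auto simp: seg_ok_def)

lemma segs_Nil_iff[simp]: "segs i x = [] \<longleftrightarrow> x = []"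
  by (metis concat.simps(1) segs.simps(1) segs_concat)

lemma hd_segs: "x \<noteq> [] \<Longrightarrow> hd (hd (segs i x)) = hd x"
proof -
  assume x: "x \<noteq> []"
  obtain s ss where e: "segs i x = s # ss" using x by (cases "segs i x") auto
  have "s \<noteq> []" using segs_ne[of s i x] e by simp
  then show ?thesis using segs_concat[of i x] e by auto
qed

lemma last_segs: "x \<noteq> [] \<Longrightarrow> last (last (segs i x)) = last x"
proof -
  assume x: "x \<noteq> []"
  obtain s ss where e: "segs i x = ss @ [s]" using x
    by (metis rev_exhaust segs_Nil_iff)
  have "s \<noteq> []" using segs_ne[of s i x] e by simp
  then show ?thesis using segs_concat[of i x] e by auto
qed

lemma segs_app:
  assumes "s \<noteq> []" "successively (linkp i) s" "r = [] \<or> \<not> linkp i (last s) (hd r)"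
  shows "segs i (s @ r) = s # segs i r"
  using assms
proof (induction s)
  case (Cons a s')
  show ?case
  proof (cases s')
    case Nil
    then show ?thesis using Cons by (cases r) auto
  next
    case (Cons b s'')
    have l: "linkp i a b" using Cons.prems(2) \<open>s' = b # s''\<close> by simp
    have ih: "segs i (s' @ r) = s' # segs i r"
      using Cons.IH Cons.prems \<open>s' = b # s''\<close> by (auto simp: successively_Cons)
    show ?thesis using l ih \<open>s' = b # s''\<close> by simp
  qed
qed simp

lemma segs_of_ok: "seg_ok i ss \<Longrightarrow> segs i (concat ss) = ss"
proof (induction ss)
  case (Cons s ss)
  have s: "s \<noteq> []" "successively (linkp i) s" using Cons.prems by (auto simp: seg_ok_def)
  have ok: "seg_ok i ss" using Cons.prems by (auto simp: seg_ok_def successively_Cons)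
  have j: "concat ss = [] \<or> \<not> linkp i (last s) (hd (concat ss))"
  proof (cases ss)
    case (Cons t ts)
    have "t \<noteq> []" using ok Cons by (auto simp: seg_ok_def)
    then show ?thesis using Cons.prems \<open>ss = t # ts\<close> by (auto simp: seg_ok_def)
  qed simp
  show ?case using segs_app[OF s j] Cons.IH[OF ok] by simp
qed simp

lemma seg_ok_append:
  assumes "seg_ok i ss" "seg_ok i tt" "ss \<noteq> []" "tt \<noteq> []" "\<not> linkp i (last (last ss)) (hd (hd tt))"
  shows "seg_ok i (ss @ tt)"
  using assms by (auto simp: seg_ok_def successively_append_iff)

lemma segs_append:
  assumes "u \<noteq> []" "v \<noteq> []" "\<not> linkp i (last u) (hd v)"
  shows "segs i (u @ v) = segs i u @ segs i v"
proof -
  have "seg_ok i (segs i u @ segs i v)"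
    using assms by (intro seg_ok_append segs_ok) (auto simp: hd_segs last_segs)
  from segs_of_ok[OF this] show ?thesis by simp
qed

lemma phi_append:
  assumes "u \<noteq> []" "v \<noteq> []" "\<not> linkp i (last u) (hd v)"
  shows "phi i (u @ v) = phi i u @ phi i v"
  using segs_append[OF assms] by (simp add: phi_def)


lemma chain_cases:
  assumes "s \<noteq> []" "successively (linkp i) s"
  shows "(\<exists>a. s = [a]) \<or> ((\<forall>a\<in>set s. act i a) \<and> (\<forall>j < length s - 1. colr (s ! j) = 0))"
proof (cases "length s = 1")
  case True
  then show ?thesis by (cases s) auto
next
  case False
  have "length s > 0" using assms(1) by simp
  with False have m: "length s \<ge> 2" by linarith
  have L: "\<And>j. Suc j < length s \<Longrightarrow> linkp i (s ! j) (s ! Suc j)"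
    using assms(2) successively_nth by blast
  have "\<forall>a\<in>set s. act i a"
  proof
    fix a assume "a \<in> set s"
    then obtain j where j: "j < length s" "a = s ! j" by (auto simp: in_set_conv_nth)
    show "act i a"
    proof (cases j)
      case 0
      then show ?thesis using L[of 0] m j by (simp add: linkp_def)
    next
      case (Suc j')
      then show ?thesis using L[of j'] j by (simp add: linkp_def)
    qed
  qed
  moreover have "\<forall>j < length s - 1. colr (s ! j) = 0"
    using L by (auto simp: linkp_def)
  ultimately show ?thesis by blast
qed

lemma T_single_inact: "\<not> act i a \<Longrightarrow> T i [a] = [a]"
  by (cases a) (auto simp: T_def act_def flip_inact absv_def colr_def barred_def)

lemma T_Nil_iff[simp]: "T i s = [] \<longleftrightarrow> s = []"
  by (metis length_T length_0_conv)

lemma last_T: "s \<noteq> [] \<Longrightarrow> last (T i s) = (flip i (absv (hd s)), colr (last s), barred (last s))"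
  using T_nth[of "length s - 1" s i]
  by (simp add: last_conv_nth[of "T i s"] last_conv_nth[of s] hd_conv_nth)

lemma hd_T: "s \<noteq> [] \<Longrightarrow> hd (T i s) = (flip i (absv (last s)), colr (hd s),
    (if 1 < length s then barred (s ! (length s - 2)) else barred (s ! 0)))"
  using T_nth[of 0 s i]
  by (auto simp: last_conv_nth hd_conv_nth[of "T i s"] hd_conv_nth[of s])

lemma act_flip_letter: "act i (flip i u, m, b) \<longleftrightarrow> (u = i \<or> u = Suc i)"
  by (simp add: act_def absv_def act_flip)

definition sima :: "nat \<Rightarrow> letter \<Rightarrow> letter \<Rightarrow> bool" where
  "sima i a' a \<longleftrightarrow> act i a' = act i a \<and> colr a' = colr a \<and> barred a' = barred a \<and> (\<not> act i a \<longrightarrow> a' = a)"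
definition simb :: "nat \<Rightarrow> letter \<Rightarrow> letter \<Rightarrow> bool" where
  "simb i b' b \<longleftrightarrow> act i b' = act i b \<and> (\<not> act i b \<longrightarrow> b' = b)"

lemma sima_last_T:
  assumes "s \<noteq> []" "successively (linkp i) s"
  shows "sima i (last (T i s)) (last s)"
  using chain_cases[OF assms]
proof
  assume "\<exists>a. s = [a]"
  then obtain a where "s = [a]" by blast
  have h: "last (T i s) = (flip i (absv a), colr a, barred a)" using \<open>s = [a]\<close> by (simp add: last_T)
  have "act i (last (T i s)) = act i a" unfolding h act_flip_letter by (simp add: act_def)
  then show ?thesis using \<open>s = [a]\<close> T_single_inact[of i a] h by (auto simp: sima_def colr_def barred_def)
next
  assume "(\<forall>a\<in>set s. act i a) \<and> (\<forall>j < length s - 1. colr (s ! j) = 0)"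
  then have "act i (hd s)" "act i (last s)" using assms(1) by auto
  moreover have "act i (last (T i s))" unfolding last_T[OF assms(1)] act_flip_letter
    using \<open>act i (hd s)\<close> by (simp add: act_def)
  ultimately show ?thesis using assms(1)
    by (auto simp: sima_def last_T colr_def barred_def)
qed

lemma simb_hd_T:
  assumes "s \<noteq> []" "successively (linkp i) s"
  shows "simb i (hd (T i s)) (hd s)"
  using chain_cases[OF assms]
proof
  assume "\<exists>a. s = [a]"
  then obtain a where "s = [a]" by blast
  have h: "hd (T i s) = (flip i (absv a), colr a, barred a)" using \<open>s = [a]\<close> by (simp add: hd_T)
  have "act i (hd (T i s)) = act i a" unfolding h act_flip_letter by (simp add: act_def)
  then show ?thesis using \<open>s = [a]\<close> T_single_inact[of i a] by (auto simp: simb_def)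
next
  assume "(\<forall>a\<in>set s. act i a) \<and> (\<forall>j < length s - 1. colr (s ! j) = 0)"
  then have "act i (hd s)" "act i (last s)" using assms(1) by auto
  moreover have "act i (hd (T i s))" unfolding hd_T[OF assms(1)] act_flip_letter
    using \<open>act i (last s)\<close> by (simp add: act_def)
  ultimately show ?thesis by (auto simp: simb_def)
qed

lemma colr_hd_T: "s \<noteq> [] \<Longrightarrow> colr (hd (T i s)) = colr (hd s)"
  by (simp add: hd_T colr_def)

lemma linkp_sim: "sima i a' a \<Longrightarrow> simb i b' b \<Longrightarrow> linkp i a' b' = linkp i a b"
  by (auto simp: linkp_def sima_def simb_def)

lemma RR_junc:
  assumes "\<not> linkp i a b" "RR a b" "barred a \<longrightarrow> colr a = 0" "sima i a' a" "simb i b' b"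
  shows "RR a' b'"
proof (cases "act i a")
  case False
  then have "a' = a" using assms(4) by (simp add: sima_def)
  show ?thesis
  proof (cases "act i b")
    case False
    then have "b' = b" using assms(5) by (simp add: simb_def)
    then show ?thesis using \<open>a' = a\<close> assms(2) by simp
  next
    case True
    then have "act i b'" using assms(5) by (simp add: simb_def)
    then show ?thesis using True \<open>a' = a\<close> assms(2) False unfolding RR_def act_def by auto
  qed
next
  case True
  then have a': "act i a'" "colr a' = colr a" "barred a' = barred a" using assms(4) by (auto simp: sima_def)
  show ?thesis
  proof (cases "act i b")
    case False
    then have "b' = b" using assms(5) by (simp add: simb_def)
    then show ?thesis using True a' assms(2) False unfolding RR_def act_def by auto
  next
    case tb: True
    then have "colr a \<noteq> 0" using assms(1) True by (simp add: linkp_def)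
    then show ?thesis using a' assms(3) unfolding RR_def by auto
  qed
qed

lemma flip_le: "(u = i \<or> u = Suc i) \<Longrightarrow> (v = i \<or> v = Suc i) \<Longrightarrow> flip i u \<le> flip i v \<longleftrightarrow> v \<le> u"
  by (auto simp: flip_def sw_def)

lemma RR_T_int:
  assumes "s \<noteq> []" "successively (linkp i) s" "successively RR s"
  shows "successively RR (T i s)"
  unfolding successively_conv_nth
proof (intro allI impI)
  fix j assume j: "Suc j < length (T i s)"
  then have m: "Suc j < length s" by simp
  then have "\<not> (\<exists>a. s = [a])" by auto
  then have ch: "(\<forall>a\<in>set s. act i a)" "(\<forall>j < length s - 1. colr (s ! j) = 0)"
    using chain_cases[OF assms(1,2)] by auto
  define p where "p = length s - 2 - j"
  have p: "Suc p < length s" "length s - 1 - j = Suc p" "length s - 1 - Suc j = p" using m by (auto simp: p_def)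
  have R: "RR (s ! p) (s ! Suc p)" using assms(3) p(1) successively_nth by blast
  have a1: "act i (s ! p)" "act i (s ! Suc p)" using ch(1) p(1) by auto
  have c0: "colr (s ! p) = 0" "colr (s ! j) = 0" using ch(2) p m by auto
  have e1: "T i s ! j = (flip i (absv (s ! Suc p)), colr (s ! j), barred (s ! p))"
    using T_nth[of j s i] m p by (simp add: p_def)
  have e2: "T i s ! Suc j = (flip i (absv (s ! p)), colr (s ! Suc j),
      (if Suc j < length s - 1 then barred (s ! (length s - 2 - Suc j)) else barred (s ! (length s - 1))))"
    using T_nth[of "Suc j" s i] m p by simp
  show "RR (T i s ! j) (T i s ! Suc j)"
    using R a1 c0 unfolding e1 e2
    by (auto simp: RR_def absv_def colr_def barred_def act_def flip_le)
qed

lemma RR_T_cyc: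
  assumes "s \<noteq> []" "\<forall>a\<in>set s. act i a" "RR (last s) (hd s)"
  shows "RR (last (T i s)) (hd (T i s))"
proof -
  have a: "act i (hd s)" "act i (last s)" using assms by auto
  show ?thesis using assms(3) a unfolding last_T[OF assms(1)] hd_T[OF assms(1)]
    by (auto simp: RR_def absv_def colr_def barred_def act_def flip_le)
qed


lemma succ_conj: "successively P xs \<Longrightarrow> successively Q xs \<Longrightarrow> successively (\<lambda>x y. P x y \<and> Q x y) xs"
  by (simp add: successively_conv_nth)

lemma hd_concat_ne: "ss \<noteq> [] \<Longrightarrow> hd ss \<noteq> [] \<Longrightarrow> hd (concat ss) = hd (hd ss)"
  by (cases ss) auto

lemma last_concat_ne: "ss \<noteq> [] \<Longrightarrow> last ss \<noteq> [] \<Longrightarrow> last (concat ss) = last (last ss)"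
  by (induction ss rule: rev_induct) auto

lemma succ_concat:
  "\<forall>s\<in>set ss. s \<noteq> [] \<Longrightarrow> successively P (concat ss) \<longleftrightarrow>
     (\<forall>s\<in>set ss. successively P s) \<and> successively (\<lambda>s t. P (last s) (hd t)) ss"
proof (induction ss)
  case (Cons s ss)
  show ?case
  proof (cases ss)
    case Nil then show ?thesis by simp
  next
    case (Cons t ts)
    have "t \<noteq> []" using Cons.prems \<open>ss = t # ts\<close> by auto
    then have "hd (concat ss) = hd t" "concat ss \<noteq> []" using \<open>ss = t # ts\<close> by auto
    then show ?thesis using Cons.IH Cons.prems \<open>ss = t # ts\<close>
      by (auto simp: successively_append_iff)
  qed
qed simp

lemma chain_T:
  assumes "s \<noteq> []" "successively (linkp i) s"
  shows "successively (linkp i) (T i s)"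
  using chain_cases[OF assms]
proof
  assume "\<exists>a. s = [a]" then show ?thesis by (auto simp: T_def)
next
  assume ch: "(\<forall>a\<in>set s. act i a) \<and> (\<forall>j < length s - 1. colr (s ! j) = 0)"
  show ?thesis unfolding successively_conv_nth
  proof (intro allI impI)
    fix j assume j: "Suc j < length (T i s)"
    have a1: "act i (s ! (length s - 1 - j))" "act i (s ! (length s - 1 - Suc j))" using ch j by auto
    have c: "colr (s ! j) = 0" using ch j by auto
    show "linkp i (T i s ! j) (T i s ! Suc j)"
      using a1 c j T_nth[of j s i] T_nth[of "Suc j" s i]
      by (simp add: linkp_def act_flip_letter colr_def) (simp add: act_def)
  qed
qed

lemma seg_ok_map_T: "seg_ok i ss \<Longrightarrow> seg_ok i (map (T i) ss)"
proof -
  assume ok: "seg_ok i ss"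
  have 1: "\<forall>s\<in>set (map (T i) ss). s \<noteq> [] \<and> successively (linkp i) s"
    using ok chain_T by (auto simp: seg_ok_def)
  have "successively (\<lambda>s t. \<not> linkp i (last s) (hd t)) ss" using ok by (simp add: seg_ok_def)
  then have "successively (\<lambda>s t. \<not> linkp i (last (T i s)) (hd (T i t))) ss"
  proof (rule successively_mono)
    fix s t assume st: "s \<in> set ss" "t \<in> set ss" "\<not> linkp i (last s) (hd t)"
    have "s \<noteq> []" "successively (linkp i) s" "t \<noteq> []" "successively (linkp i) t"
      using ok st by (auto simp: seg_ok_def)
    then show "\<not> linkp i (last (T i s)) (hd (T i t))"
      using linkp_sim[OF sima_last_T simb_hd_T] st(3) by metis
  qed
  then show ?thesis using 1 by (simp add: seg_ok_def successively_map)
qed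

lemma segs_phi: "segs i (phi i x) = map (T i) (segs i x)"
  unfolding phi_def by (rule segs_of_ok[OF seg_ok_map_T[OF segs_ok]])

lemma phi_phi[simp]: "phi i (phi i x) = x"
proof -
  have "phi i (phi i x) = concat (map (T i) (map (T i) (segs i x)))"
    by (simp add: phi_def[of i "phi i x"] segs_phi)
  also have "\<dots> = concat (segs i x)"
    using segs_ne[of _ i x] by (simp add: T_T cong: map_cong)
  finally show ?thesis by simp
qed

lemma length_phi[simp]: "length (phi i x) = length x"
proof -
  have "length (phi i x) = sum_list (map length (segs i x))"
    unfolding phi_def by (simp add: length_concat comp_def)
  also have "\<dots> = length (concat (segs i x))" by (simp only: length_concat)
  finally show ?thesis by simp
qed

lemma map_colr_phi: "map colr (phi i x) = map colr x"
proof -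
  have "map colr (phi i x) = concat (map (map colr) (segs i x))"
    unfolding phi_def by (simp add: map_concat comp_def map_colr_T)
  then show ?thesis by (simp add: map_concat[symmetric])
qed

lemma phi_Nil_iff[simp]: "phi i x = [] \<longleftrightarrow> x = []"
  by (metis length_phi length_0_conv)

lemma alllink_chain: "alllink i x \<Longrightarrow> successively (linkp i) x"
  by (auto simp: alllink_def successively_conv_nth linkp_def)

lemma segs_chain: "x \<noteq> [] \<Longrightarrow> successively (linkp i) x \<Longrightarrow> segs i x = [x]"
  using segs_app[of x i "[]"] by simp

lemma phi_alllink: "alllink i x \<Longrightarrow> x \<noteq> [] \<Longrightarrow> phi i x = T i x"
  using segs_chain[OF _ alllink_chain] by (simp add: phi_def)

lemma alllink_T: "alllink i x \<Longrightarrow> alllink i (T i x)"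
  unfolding alllink_def
proof
  fix a assume al: "\<forall>a\<in>set x. act i a \<and> colr a = 0" and a: "a \<in> set (T i x)"
  then obtain j where j: "j < length x" "a = T i x ! j" by (auto simp: in_set_conv_nth)
  have "act i (x ! (length x - 1 - j))" "colr (x ! j) = 0" using al j by auto
  then show "act i a \<and> colr a = 0" using j T_nth[of j x i]
    by (simp add: act_flip_letter colr_def) (simp add: act_def)
qed

lemma last_phi: "x \<noteq> [] \<Longrightarrow> last (phi i x) = last (T i (last (segs i x)))"
  unfolding phi_def using segs_ne[of _ i x]
  by (subst last_concat_ne) (auto simp: last_map)

lemma hd_phi: "x \<noteq> [] \<Longrightarrow> hd (phi i x) = hd (T i (hd (segs i x)))"
  unfolding phi_def using segs_ne[of _ i x]
  by (subst hd_concat_ne) (auto simp: hd_map)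

lemma last_seg_in: "x \<noteq> [] \<Longrightarrow> last (segs i x) \<in> set (segs i x)"
  by simp

lemma seg_chain: "s \<in> set (segs i x) \<Longrightarrow> successively (linkp i) s"
  using segs_ok[of i x] by (auto simp: seg_ok_def)

lemma sima_last_phi: "x \<noteq> [] \<Longrightarrow> sima i (last (phi i x)) (last x)"
proof -
  assume x: "x \<noteq> []"
  have "last (segs i x) \<in> set (segs i x)" using x by simp
  then have "last (segs i x) \<noteq> []" "successively (linkp i) (last (segs i x))"
    using segs_ne seg_chain by blast+
  from sima_last_T[OF this] show ?thesis using last_segs[OF x, of i] by (simp add: last_phi[OF x])
qed

lemma simb_hd_phi: "x \<noteq> [] \<Longrightarrow> simb i (hd (phi i x)) (hd x)"
proof -
  assume x: "x \<noteq> []"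
  have "hd (segs i x) \<in> set (segs i x)" using x by simp
  then have "hd (segs i x) \<noteq> []" "successively (linkp i) (hd (segs i x))"
    using segs_ne seg_chain by blast+
  from simb_hd_T[OF this] show ?thesis using hd_segs[OF x, of i] by (simp add: hd_phi[OF x])
qed

lemma good_phi: "good i x \<Longrightarrow> good i (phi i x)"
proof -
  assume g: "good i x"
  then have x: "x \<noteq> []" by (simp add: good_def)
  show ?thesis
  proof (cases "alllink i x")
    case True
    then show ?thesis using x alllink_T phi_alllink by (simp add: good_def)
  next
    case False
    then have "\<not> linkp i (last x) (hd x)" using g by (simp add: good_def)
    then show ?thesis using linkp_sim[OF sima_last_phi[OF x] simb_hd_phi[OF x]] x
      by (simp add: good_def)
  qed
qed


lemma phi_RR:
  assumes g: "good i x" and v: "\<forall>a\<in>set x. barred a \<longrightarrow> colr a = 0"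
    and r: "successively RR x" "RR (last x) (hd x)"
  shows "successively RR (phi i x) \<and> RR (last (phi i x)) (hd (phi i x))"
proof -
  have x: "x \<noteq> []" using g by (simp add: good_def)
  show ?thesis
  proof (cases "alllink i x")
    case True
    have "\<forall>a\<in>set x. act i a" using True by (simp add: alllink_def)
    then show ?thesis using phi_alllink[OF True x] RR_T_int[OF x alllink_chain[OF True] r(1)]
        RR_T_cyc[OF x _ r(2)] by simp
  next
    case False
    then have nl: "\<not> linkp i (last x) (hd x)" using g by (simp add: good_def)
    define ss where "ss = segs i x"
    have ne: "\<forall>s\<in>set ss. s \<noteq> []" using segs_ne by (auto simp: ss_def)
    have ch: "\<forall>s\<in>set ss. successively (linkp i) s" using seg_chain by (auto simp: ss_def)
    have cx: "concat ss = x" by (simp add: ss_def)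
    have r1: "\<forall>s\<in>set ss. successively RR s" "successively (\<lambda>s t. RR (last s) (hd t)) ss"
      using r(1) succ_concat[OF ne, of RR] cx by auto
    have jn: "successively (\<lambda>s t. \<not> linkp i (last s) (hd t)) ss"
      using segs_ok[of i x] by (simp add: seg_ok_def ss_def)
    have ne2: "\<forall>s\<in>set (map (T i) ss). s \<noteq> []" using ne by auto
    have a1: "\<forall>s\<in>set (map (T i) ss). successively RR s"
      using r1(1) ne ch RR_T_int by auto
    have "successively (\<lambda>s t. RR (last s) (hd t) \<and> \<not> linkp i (last s) (hd t)) ss"
      using succ_conj[OF r1(2) jn] .
    then have "successively (\<lambda>s t. RR (last (T i s)) (hd (T i t))) ss"
    proof (rule successively_mono)
      fix s t assume st: "s \<in> set ss" "t \<in> set ss" "RR (last s) (hd t) \<and> \<not> linkp i (last s) (hd t)"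
      have "last s \<in> set s" using st(1) ne by simp
      then have "last s \<in> set x" using st(1) cx by auto
      then have "barred (last s) \<longrightarrow> colr (last s) = 0" using v by blast
      then show "RR (last (T i s)) (hd (T i t))"
        using RR_junc[OF _ _ _ sima_last_T simb_hd_T] st ne ch by blast
    qed
    then have a2: "successively (\<lambda>s t. RR (last s) (hd t)) (map (T i) ss)"
      by (simp add: successively_map)
    have 1: "successively RR (phi i x)"
      unfolding phi_def ss_def[symmetric] using succ_concat[OF ne2, of RR] a1 a2 by simp
    have vl: "barred (last x) \<longrightarrow> colr (last x) = 0" using v x by simp
    have 2: "RR (last (phi i x)) (hd (phi i x))"
      using RR_junc[OF nl r(2) vl sima_last_phi[OF x] simb_hd_phi[OF x]] .
    show ?thesis using 1 2 by simp
  qed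
qed

lemma len_filter_map: "length (filter P (map f w)) = length (filter (\<lambda>a. P (f a)) w)"
  by (induction w) auto

lemma cnt_T: "length (filter (\<lambda>a. absv a = u) (T i s)) = length (filter (\<lambda>a. absv a = flip i u) s)"
proof -
  have "length (filter (\<lambda>a. absv a = u) (T i s)) = length (filter (\<lambda>v. v = u) (map absv (T i s)))"
    by (simp only: len_filter_map)
  also have "\<dots> = length (filter (\<lambda>v. flip i v = u) (rev (map absv s)))"
    by (simp add: map_absv_T len_filter_map comp_def)
  also have "\<dots> = length (filter (\<lambda>v. v = flip i u) (map absv s))"
    by (simp add: rev_filter[symmetric] flip_eq_iff)
  also have "\<dots> = length (filter (\<lambda>a. absv a = flip i u) s)" by (simp add: len_filter_map comp_def)
  finally show ?thesis .
qed

lemma bar_T: "s \<noteq> [] \<Longrightarrow> length (filter barred (T i s)) = length (filter barred s)"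
proof -
  assume s: "s \<noteq> []"
  have e: "length (filter barred w) = length (filter (\<lambda>b. b) (map barred w))" for w
    by (simp only: len_filter_map)
  have "map barred s = butlast (map barred s) @ [last (map barred s)]" using s by simp
  then have "length (filter (\<lambda>b. b) (map barred s)) = length (filter (\<lambda>b. b) (butlast (map barred s) @ [last (map barred s)]))"
    by metis
  then show ?thesis unfolding e map_barred_T[OF s] by (simp add: rev_filter[symmetric])
qed

lemma count_phi: "length (filter (\<lambda>a. absv a = u) (phi i x)) = length (filter (\<lambda>a. absv a = flip i u) x)"
proof -
  have "length (filter (\<lambda>a. absv a = u) (concat (map (T i) ss))) = length (filter (\<lambda>a. absv a = flip i u) (concat ss))" for ss
    by (induction ss) (simp_all add: cnt_T)
  then show ?thesis unfolding phi_def by (metis segs_concat)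
qed

lemma barred_phi: "length (filter barred (phi i x)) = length (filter barred x)"
proof -
  have "\<forall>s\<in>set ss. s \<noteq> [] \<Longrightarrow> length (filter barred (concat (map (T i) ss))) = length (filter barred (concat ss))" for ss
    by (induction ss) (simp_all add: bar_T)
  then show ?thesis unfolding phi_def using segs_ne by (metis segs_concat)
qed

lemma colvec_phi: "colvec l (phi i x) = colvec l x"
proof -
  have "length (filter (\<lambda>a. colr a = m) (phi i x)) = length (filter (\<lambda>a. colr a = m) x)" for m
  proof -
    have "length (filter (\<lambda>a. colr a = m) (phi i x)) = length (filter (\<lambda>c. c = m) (map colr (phi i x)))"
      by (simp only: len_filter_map)
    also have "\<dots> = length (filter (\<lambda>a. colr a = m) x)" by (simp add: map_colr_phi len_filter_map comp_def)
    finally show ?thesis .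
  qed
  then show ?thesis by (simp add: colvec_def)
qed



definition pw :: "'a list \<Rightarrow> nat \<Rightarrow> 'a list" where
  "pw v d = concat (replicate d v)"

lemma pw_Suc: "pw v (Suc d) = v @ pw v d" by (simp add: pw_def)
lemma pw_Suc': "pw v (Suc d) = pw v d @ v"
  by (simp add: pw_def replicate_append_same[symmetric] del: replicate_append_same)

lemma pw_hd_aux: "v \<noteq> [] \<Longrightarrow> pw v d @ [hd v] = [hd v] @ pw (rotate1 v) d"
proof (induction d)
  case (Suc d)
  have "pw v (Suc d) @ [hd v] = v @ (pw v d @ [hd v])" by (simp add: pw_Suc)
  also have "\<dots> = v @ [hd v] @ pw (rotate1 v) d" using Suc by simp
  also have "\<dots> = [hd v] @ (tl v @ [hd v]) @ pw (rotate1 v) d" using Suc.prems by (cases v) auto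
  also have "\<dots> = [hd v] @ pw (rotate1 v) (Suc d)" using Suc.prems by (simp add: pw_Suc rotate1_hd_tl)
  finally show ?case .
qed (simp add: pw_def)

lemma rotate1_pw: "rotate1 (pw v d) = pw (rotate1 v) d"
proof (cases "v = [] \<or> d = 0")
  case True then show ?thesis by (auto simp: pw_def)
next
  case False
  then obtain d' where d: "d = Suc d'" "v \<noteq> []" by (cases d) auto
  have "rotate1 (pw v d) = tl v @ pw v d' @ [hd v]"
    using d by (simp add: pw_Suc rotate1_hd_tl)
  also have "\<dots> = (tl v @ [hd v]) @ pw (rotate1 v) d'" using pw_hd_aux[OF d(2)] by simp
  finally show ?thesis using d by (simp add: pw_Suc rotate1_hd_tl)
qed

lemma rotate_pw: "rotate k (pw v d) = pw (rotate k v) d"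
  by (induction k) (simp_all add: rotate1_pw)

lemma rotate_inv: "\<exists>b. rotate b (rotate k x) = x"
proof (cases "x = []")
  case False
  let ?n = "length x"
  have n: "?n > 0" using False by simp
  have r: "k mod ?n < ?n" using n by simp
  have q: "?n * (k div ?n) + k mod ?n = k" by (rule mult_div_mod_eq)
  have "?n - k mod ?n + k = ?n + ?n * (k div ?n)" using r q by linarith
  then have "?n - k mod ?n + k = ?n * Suc (k div ?n)" by simp
  then have "(?n - k mod ?n + k) mod ?n = 0" by simp
  then show ?thesis by (intro exI[of _ "?n - k mod ?n"]) (simp add: rotate_rotate)
qed simp

lemma prim_rotate: "primitive_word x \<Longrightarrow> primitive_word (rotate k x)"
proof -
  assume p: "primitive_word x"
  show ?thesis unfolding primitive_word_def
  proof
    show "rotate k x \<noteq> []" using p by (simp add: primitive_word_def)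
    show "\<not> (\<exists>v d. 2 \<le> d \<and> rotate k x = concat (replicate d v))"
    proof
      assume "\<exists>v d. 2 \<le> d \<and> rotate k x = concat (replicate d v)"
      then obtain v d where vd: "2 \<le> d" "rotate k x = pw v d" by (auto simp: pw_def)
      obtain b where "rotate b (rotate k x) = x" using rotate_inv by blast
      then have "x = pw (rotate b v) d" using vd by (simp add: rotate_pw)
      then show False using p vd(1) by (auto simp: primitive_word_def pw_def)
    qed
  qed
qed

lemma cyc_iff:
  assumes "x \<noteq> []"
  shows "(\<forall>j<length x. P (x ! j) (x ! ((j + 1) mod length x))) \<longleftrightarrow> successively P x \<and> P (last x) (hd x)"
proof -
  have l: "last x = x ! (length x - 1)" "hd x = x ! 0" using assms by (auto simp: last_conv_nth hd_conv_nth)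
  show ?thesis
  proof
    assume a: "\<forall>j<length x. P (x ! j) (x ! ((j + 1) mod length x))"
    have "successively P x" unfolding successively_conv_nth
    proof (intro allI impI)
      fix j assume "Suc j < length x"
      then show "P (x ! j) (x ! Suc j)" using a[rule_format, of j] by simp
    qed
    moreover have "P (last x) (hd x)" using a[rule_format, of "length x - 1"] assms l by simp
    ultimately show "successively P x \<and> P (last x) (hd x)" by simp
  next
    assume a: "successively P x \<and> P (last x) (hd x)"
    show "\<forall>j<length x. P (x ! j) (x ! ((j + 1) mod length x))"
    proof (intro allI impI)
      fix j assume j: "j < length x"
      show "P (x ! j) (x ! ((j + 1) mod length x))"
      proof (cases "Suc j < length x")
        case True then show ?thesis using a successively_nth[of P x j] by simp
      next
        case False
        then have "j = length x - 1" using j by simp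
        moreover have "(length x - 1 + 1) mod length x = 0" using assms by simp
        ultimately show ?thesis using a l j by simp
      qed
    qed
  qed
qed

lemma nw_cyc: "necklace_word l w \<longleftrightarrow> primitive_word w \<and> (\<forall>a\<in>set w. valid_letter l a) \<and>
   (\<forall>j<length w. RR (w ! j) (w ! ((j + 1) mod length w))) \<and> (length w = 1 \<longrightarrow> \<not> barred (hd w))"
  unfolding necklace_word_def RR_def by simp

lemma nw_rotate: "necklace_word l x \<Longrightarrow> necklace_word l (rotate k x)"
proof -
  assume nw: "necklace_word l x"
  let ?n = "length x"
  have c: "\<forall>j<?n. RR (x ! j) (x ! ((j + 1) mod ?n))" using nw by (simp add: nw_cyc)
  have "\<forall>j<?n. RR (rotate k x ! j) (rotate k x ! ((j + 1) mod ?n))"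
  proof (intro allI impI)
    fix j assume j: "j < ?n"
    then have n: "?n > 0" by linarith
    then have xne: "x \<noteq> []" by auto
    have e1: "rotate k x ! j = x ! ((k + j) mod ?n)" using j by (simp add: nth_rotate)
    have e2: "rotate k x ! ((j + 1) mod ?n) = x ! ((k + (j + 1) mod ?n) mod ?n)"
      using n xne by (simp add: nth_rotate)
    have e3: "(k + (j + 1) mod ?n) mod ?n = ((k + j) mod ?n + 1) mod ?n"
      by (simp add: mod_add_right_eq mod_add_left_eq add.assoc mod_Suc_eq)
    show "RR (rotate k x ! j) (rotate k x ! ((j + 1) mod ?n))"
      unfolding e1 e2 e3 using c n by simp
  qed
  then show ?thesis using nw prim_rotate by (auto simp: nw_cyc)
qed


lemma list_eq_maps:
  "map absv y = map absv z \<Longrightarrow> map colr y = map colr z \<Longrightarrow> map barred y = map barred z \<Longrightarrow> y = z"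
  by (metis zip3_id)

lemma map_colr0: "\<forall>a\<in>set c. colr a = 0 \<Longrightarrow> map colr c = replicate (length c) 0"
  by (induction c) auto

lemma T_rotate1:
  assumes "c \<noteq> []" "\<forall>a\<in>set c. colr a = 0"
  shows "T i c = rotate1 (T i (rotate1 c))"
proof (rule list_eq_maps)
  obtain a cs where c: "c = a # cs" using assms(1) by (cases c) auto
  show "map absv (T i c) = map absv (rotate1 (T i (rotate1 c)))"
    unfolding rotate1_map[symmetric] map_absv_T c by simp
  show "map colr (T i c) = map colr (rotate1 (T i (rotate1 c)))"
    unfolding rotate1_map[symmetric] map_colr_T using assms(2) map_colr0[of c] map_colr0[of "rotate1 c"]
    by simp
  show "map barred (T i c) = map barred (rotate1 (T i (rotate1 c)))"
  proof (cases cs rule: rev_cases)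
    case Nil then show ?thesis using c by (simp add: T_def)
  next
    case (snoc ys y)
    have r: "rotate1 c \<noteq> []" using assms(1) by simp
    show ?thesis unfolding rotate1_map[symmetric] map_barred_T[OF r] map_barred_T[OF assms(1)]
      using c snoc by (simp add: butlast_append)
  qed
qed

lemma alllink_rotate: "alllink i (rotate k x) = alllink i x"
  by (simp add: alllink_def)

lemma T_rot:
  assumes "alllink i c" "c \<noteq> []"
  shows "\<exists>j. T i (rotate k c) = rotate j (T i c)"
proof (induction k)
  case 0 then show ?case by (intro exI[of _ 0]) simp
next
  case (Suc k)
  then obtain j where j: "T i (rotate k c) = rotate j (T i c)" by blast
  let ?d = "rotate k c"
  have d: "?d \<noteq> []" "\<forall>a\<in>set ?d. colr a = 0" using assms by (auto simp: alllink_def)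
  have "T i ?d = rotate1 (T i (rotate1 ?d))" by (rule T_rotate1[OF d])
  then have "rotate (length c - 1) (T i ?d) = rotate (length c - 1) (rotate 1 (T i (rotate1 ?d)))"
    by simp
  also have "\<dots> = rotate (length c - 1 + 1) (T i (rotate1 ?d))" by (rule rotate_rotate)
  also have "\<dots> = T i (rotate1 ?d)" using assms(2) by simp
  finally have "T i (rotate (Suc k) c) = rotate (length c - 1 + j) (T i c)"
    using j by (simp add: rotate_rotate)
  then show ?case by blast
qed

lemma phi_rot:
  assumes g1: "good i x" and g2: "good i (rotate k x)"
  shows "\<exists>j. phi i (rotate k x) = rotate j (phi i x)"
proof (cases "alllink i x")
  case True
  have x: "x \<noteq> []" using g1 by (simp add: good_def)
  have "alllink i (rotate k x)" using True by (simp add: alllink_rotate)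
  then show ?thesis using phi_alllink[OF True x] phi_alllink[of i "rotate k x"] x T_rot[OF True x, of k]
    by simp
next
  case False
  have x: "x \<noteq> []" using g1 by (simp add: good_def)
  have nl: "\<not> linkp i (last x) (hd x)" using g1 False by (simp add: good_def)
  let ?p = "k mod length x"
  show ?thesis
  proof (cases "?p = 0")
    case True then show ?thesis by (intro exI[of _ 0]) simp
  next
    case False
    define u where "u = take ?p x"
    define v where "v = drop ?p x"
    have p: "?p < length x" using x by simp
    have uv: "u \<noteq> []" "v \<noteq> []" using False p by (auto simp: u_def v_def)
    have xe: "x = u @ v" by (simp add: u_def v_def)
    have re: "rotate k x = v @ u" by (simp add: rotate_drop_take u_def v_def)
    have "\<not> alllink i (rotate k x)" using \<open>\<not> alllink i x\<close> by (simp add: alllink_rotate)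
    then have "\<not> linkp i (last (v @ u)) (hd (v @ u))" using g2 re by (simp add: good_def)
    then have j1: "\<not> linkp i (last u) (hd v)" using uv by simp
    have j2: "\<not> linkp i (last v) (hd u)" using nl uv xe by simp
    have "phi i (rotate k x) = phi i v @ phi i u" using re phi_append[OF uv(2,1) j2] by simp
    also have "\<dots> = rotate (length (phi i u)) (phi i u @ phi i v)" by (simp only: rotate_append)
    also have "\<dots> = rotate (length (phi i u)) (phi i x)" using xe phi_append[OF uv j1] by simp
    finally show ?thesis by blast
  qed
qed

lemma good_rot_ex:
  assumes x: "x \<noteq> []"
  shows "\<exists>k. good i (rotate k x)"
proof (cases "alllink i x")
  case True then show ?thesis using x by (intro exI[of _ 0]) (simp add: good_def)
next
  case False
  then obtain a where a: "a \<in> set x" "\<not> act i a \<or> colr a \<noteq> 0" by (auto simp: alllink_def)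
  then obtain j where j: "j < length x" "x ! j = a" by (auto simp: in_set_conv_nth)
  show ?thesis
  proof (cases "act i a")
    case False
    have "hd (rotate j x) = a" using j x by (simp add: hd_rotate_conv_nth)
    then have "good i (rotate j x)" using False x by (simp add: good_def linkp_def)
    then show ?thesis by blast
  next
    case True
    then have c: "colr a \<noteq> 0" using a by simp
    have "last (rotate (Suc j) x) = rotate (Suc j) x ! (length x - 1)"
      using x by (simp add: last_conv_nth)
    also have "\<dots> = x ! ((Suc j + (length x - 1)) mod length x)"
      using x by (simp add: nth_rotate del: rotate_Suc)
    also have "(Suc j + (length x - 1)) mod length x = j"
    proof -
      have "Suc j + (length x - 1) = j + length x" using j by simp
      then show ?thesis using j by simp
    qed
    finally have "last (rotate (Suc j) x) = a" using j by simp
    then have "good i (rotate (Suc j) x)" using c x by (simp add: good_def linkp_def)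
    then show ?thesis by blast
  qed
qed

lemma T_app:
  assumes "u \<noteq> []" "w \<noteq> []" "\<forall>a\<in>set (u @ w). colr a = 0" "barred (last u) = barred (last w)"
  shows "T i (u @ w) = T i w @ T i u"
proof (rule list_eq_maps)
  show "map absv (T i (u @ w)) = map absv (T i w @ T i u)" by (simp add: map_absv_T)
  show "map colr (T i (u @ w)) = map colr (T i w @ T i u)"
    using assms(3) map_colr0[of u] map_colr0[of w] map_colr0[of "u @ w"]
    by (simp add: map_colr_T replicate_add[symmetric] add.commute)
  obtain us a where u: "u = us @ [a]" using assms(1) by (cases u rule: rev_cases) auto
  obtain ws b where w: "w = ws @ [b]" using assms(2) by (cases w rule: rev_cases) auto
  have uw: "u @ w \<noteq> []" using assms(1) by simp
  show "map barred (T i (u @ w)) = map barred (T i w @ T i u)"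
    using assms(4) unfolding map_append map_barred_T[OF uw] map_barred_T[OF assms(1)] map_barred_T[OF assms(2)]
    unfolding u w by (simp add: butlast_append)
qed

lemma set_pw: "d \<ge> 1 \<Longrightarrow> set (pw u d) = set u"
  by (simp add: pw_def)

lemma pw_ne: "u \<noteq> [] \<Longrightarrow> d \<ge> 1 \<Longrightarrow> pw u d \<noteq> []"
  by (cases d) (auto simp: pw_def)

lemma last_pw: "u \<noteq> [] \<Longrightarrow> d \<ge> 1 \<Longrightarrow> last (pw u d) = last u"
  by (cases d) (auto simp: pw_Suc' pw_def[of u 0])

lemma hd_pw: "u \<noteq> [] \<Longrightarrow> d \<ge> 1 \<Longrightarrow> hd (pw u d) = hd u"
  by (cases d) (auto simp: pw_Suc)

lemma phi_pw:
  assumes g: "good i (pw u d)" and d: "d \<ge> 1"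
  shows "phi i (pw u d) = pw (phi i u) d"
proof -
  have u: "u \<noteq> []" using g by (auto simp: good_def pw_def)
  show ?thesis
  proof (cases "alllink i u")
    case True
    have al: "alllink i (pw u n)" if "n \<ge> 1" for n
      using True unfolding alllink_def set_pw[OF that] .
    have "T i (pw u n) = pw (T i u) n" if "n \<ge> 1" for n
      using that
    proof (induction n rule: nat_induct_at_least)
      case base then show ?case by (simp add: pw_def)
    next
      case (Suc n)
      have "T i (pw u (Suc n)) = T i (u @ pw u n)" by (simp add: pw_Suc)
      also have "\<dots> = T i (pw u n) @ T i u"
        using T_app[OF u pw_ne[OF u Suc.hyps]] al[of "Suc n"] last_pw[OF u Suc.hyps] u
        by (simp add: alllink_def pw_Suc)
      also have "\<dots> = pw (T i u) (Suc n)" using Suc.IH by (simp add: pw_Suc')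
      finally show ?case .
    qed
    then show ?thesis using phi_alllink[OF al[OF d] pw_ne[OF u d]] phi_alllink[OF True u] d by simp
  next
    case False
    then have "\<not> alllink i (pw u d)" unfolding alllink_def set_pw[OF d] .
    then have nl: "\<not> linkp i (last u) (hd u)" using g last_pw[OF u d] hd_pw[OF u d] by (simp add: good_def)
    have "phi i (pw u n) = pw (phi i u) n" if "n \<ge> 1" for n
      using that
    proof (induction n rule: nat_induct_at_least)
      case base then show ?case by (simp add: pw_def)
    next
      case (Suc n)
      have "phi i (pw u (Suc n)) = phi i (u @ pw u n)" by (simp add: pw_Suc)
      also have "\<dots> = phi i u @ phi i (pw u n)"
        using phi_append[OF u pw_ne[OF u Suc.hyps]] nl hd_pw[OF u Suc.hyps] by simp
      also have "\<dots> = pw (phi i u) (Suc n)" using Suc.IH by (simp add: pw_Suc)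
      finally show ?case .
    qed
    then show ?thesis using d by simp
  qed
qed

lemma prim_phi:
  assumes g: "good i x" and p: "primitive_word x"
  shows "primitive_word (phi i x)"
  unfolding primitive_word_def
proof
  show "phi i x \<noteq> []" using g by (simp add: good_def)
  show "\<not> (\<exists>v d. 2 \<le> d \<and> phi i x = concat (replicate d v))"
  proof
    assume "\<exists>v d. 2 \<le> d \<and> phi i x = concat (replicate d v)"
    then obtain v d where vd: "2 \<le> d" "phi i x = pw v d" by (auto simp: pw_def)
    have "good i (pw v d)" using good_phi[OF g] vd by simp
    then have "phi i (pw v d) = pw (phi i v) d" using phi_pw vd(1) by simp
    then have "x = pw (phi i v) d" using vd by (metis phi_phi)
    then show False using p vd(1) by (auto simp: primitive_word_def pw_def)
  qed
qed



lemma flip_ge1: "i \<ge> 1 \<Longrightarrow> v \<ge> 1 \<Longrightarrow> flip i v \<ge> 1"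
  by (auto simp: flip_def sw_def)

lemma valid_T:
  assumes i: "i \<ge> 1" and s: "s \<noteq> []" "successively (linkp i) s" and v: "\<forall>a\<in>set s. valid_letter l a"
  shows "\<forall>a\<in>set (T i s). valid_letter l a"
proof
  fix a assume "a \<in> set (T i s)"
  then obtain j where j: "j < length s" "a = T i s ! j" by (auto simp: in_set_conv_nth)
  have e: "a = (flip i (absv (s ! (length s - 1 - j))), colr (s ! j),
           (if j < length s - 1 then barred (s ! (length s - 2 - j)) else barred (s ! (length s - 1))))"
    using T_nth[OF j(1), of i] j(2) by simp
  have v1: "valid_letter l (s ! (length s - 1 - j))" "valid_letter l (s ! j)" "valid_letter l (s ! (length s - 1))"
    using v j(1) by auto
  have c0: "j < length s - 1 \<Longrightarrow> colr (s ! j) = 0"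
  proof -
    assume jj: "j < length s - 1"
    then have "\<not> (\<exists>a. s = [a])" by auto
    then show ?thesis using chain_cases[OF s] jj by auto
  qed
  have A: "absv a \<ge> 1" using v1(1) flip_ge1[OF i] e by (simp add: valid_letter_def absv_def)
  have B: "colr a < l" using v1(2) e by (simp add: valid_letter_def colr_def)
  have C: "barred a \<longrightarrow> colr a = 0"
  proof (cases "j < length s - 1")
    case True then show ?thesis using c0 e by (simp add: colr_def)
  next
    case False
    then have "j = length s - 1" using j by simp
    then show ?thesis using v1(3) e False by (simp add: valid_letter_def colr_def barred_def)
  qed
  show "valid_letter l a" using A B C by (simp add: valid_letter_def)
qed

lemma valid_phi:
  assumes i: "i \<ge> 1" and v: "\<forall>a\<in>set x. valid_letter l a"
  shows "\<forall>a\<in>set (phi i x). valid_letter l a"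
proof
  fix a assume "a \<in> set (phi i x)"
  then obtain s where s: "s \<in> set (segs i x)" "a \<in> set (T i s)" by (auto simp: phi_def)
  have "\<forall>b\<in>set s. valid_letter l b" using v s(1) segs_concat[of i x] by (metis UN_I set_concat)
  then show "valid_letter l a" using valid_T[OF i segs_ne[OF s(1)] seg_chain[OF s(1)]] s(2) by blast
qed

lemma nw_phi:
  assumes i: "i \<ge> 1" and g: "good i x" and nw: "necklace_word l x"
  shows "necklace_word l (phi i x)"
proof -
  have x: "x \<noteq> []" using g by (simp add: good_def)
  have p: "primitive_word (phi i x)" using prim_phi[OF g] nw by (simp add: nw_cyc)
  have v: "\<forall>a\<in>set x. valid_letter l a" using nw by (simp add: nw_cyc)
  have v2: "\<forall>a\<in>set (phi i x). valid_letter l a" by (rule valid_phi[OF i v])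
  have vb: "\<forall>a\<in>set x. barred a \<longrightarrow> colr a = 0" using v by (simp add: valid_letter_def)
  have c: "successively RR x \<and> RR (last x) (hd x)" using nw cyc_iff[OF x, of RR] by (simp add: nw_cyc)
  have c2: "successively RR (phi i x) \<and> RR (last (phi i x)) (hd (phi i x))"
    using phi_RR[OF g vb] c by simp
  have c3: "\<forall>j<length (phi i x). RR (phi i x ! j) (phi i x ! ((j + 1) mod length (phi i x)))"
    using cyc_iff[of "phi i x" RR] c2 x by simp
  have l1: "length (phi i x) = 1 \<longrightarrow> \<not> barred (hd (phi i x))"
  proof
    assume "length (phi i x) = 1"
    then obtain a where a: "x = [a]" by (auto simp: length_Suc_conv)
    have "phi i x = T i [a]" using a by (simp add: phi_def)
    then have "hd (phi i x) = (flip i (absv a), colr a, barred a)" by (simp add: hd_T)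
    moreover have "\<not> barred a" using nw a by (simp add: nw_cyc)
    ultimately show "\<not> barred (hd (phi i x))" by (simp add: barred_def)
  qed
  show ?thesis using p v2 c3 l1 by (simp add: nw_cyc)
qed

section \<open>Necklaces\<close>

definition canon :: "nat \<Rightarrow> letter list \<Rightarrow> letter list" where
  "canon i x = rotate (SOME k. good i (rotate k x)) x"

lemma good_canon: "x \<noteq> [] \<Longrightarrow> good i (canon i x)"
  unfolding canon_def using good_rot_ex by (metis someI_ex)

lemma rc_self: "x \<in> rot_class x"
  unfolding rot_class_def by (metis (mono_tags, lifting) CollectI id_apply rotate0)

lemma rc_rotate: "rot_class (rotate k x) = rot_class x"
proof
  show "rot_class (rotate k x) \<subseteq> rot_class x"
    unfolding rot_class_def by (auto simp: rotate_rotate)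
  show "rot_class x \<subseteq> rot_class (rotate k x)"
  proof
    fix y assume "y \<in> rot_class x"
    then obtain a where y: "y = rotate a x" by (auto simp: rot_class_def)
    obtain b where b: "rotate b (rotate k x) = x" using rotate_inv by blast
    have "y = rotate (a + b) (rotate k x)" using y b by (metis rotate_rotate)
    then show "y \<in> rot_class (rotate k x)" by (auto simp: rot_class_def)
  qed
qed

lemma rc_mem: "y \<in> rot_class x \<Longrightarrow> rot_class y = rot_class x"
proof -
  assume "y \<in> rot_class x"
  then obtain k where "y = rotate k x" by (auto simp: rot_class_def)
  then show ?thesis by (simp add: rc_rotate)
qed

lemma nk_rep:
  assumes "is_necklace l N"
  shows "rep N \<in> N \<and> necklace_word l (rep N) \<and> rot_class (rep N) = N"
proof -
  obtain w where w: "necklace_word l w" "N = rot_class w" using assms by (auto simp: is_necklace_def)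
  have "rep N \<in> N" unfolding rep_def using w rc_self by (metis someI_ex)
  then obtain k where k: "rep N = rotate k w" using w by (auto simp: rot_class_def)
  have "necklace_word l (rep N)" using k w(1) nw_rotate by simp
  moreover have "rot_class (rep N) = N" using k w(2) rc_rotate by simp
  ultimately show ?thesis using \<open>rep N \<in> N\<close> by simp
qed

lemma nw_ne: "necklace_word l x \<Longrightarrow> x \<noteq> []"
  by (simp add: necklace_word_def primitive_word_def)

definition Phi :: "nat \<Rightarrow> letter list set \<Rightarrow> letter list set" where
  "Phi i N = rot_class (phi i (canon i (rep N)))"

lemma canon_rot: "\<exists>k. canon i x = rotate k x"
  by (auto simp: canon_def)

lemma Phi_facts:
  assumes i: "i \<ge> 1" and N: "is_necklace l N"
  shows "is_necklace l (Phi i N) \<and> (\<exists>k. rep (Phi i N) = rotate k (phi i (canon i (rep N))))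
     \<and> (\<exists>k. canon i (rep N) = rotate k (rep N))"
proof -
  let ?g = "canon i (rep N)"
  have r: "necklace_word l (rep N)" using nk_rep[OF N] by simp
  have g: "good i ?g" using good_canon nw_ne[OF r] by blast
  obtain k0 where k0: "?g = rotate k0 (rep N)" using canon_rot by blast
  have ng: "necklace_word l ?g" using nw_rotate[OF r] k0 by simp
  have nn: "necklace_word l (phi i ?g)" by (rule nw_phi[OF i g ng])
  have isn: "is_necklace l (Phi i N)" using nn by (auto simp: is_necklace_def Phi_def)
  have "rep (Phi i N) \<in> Phi i N" using nk_rep[OF isn] by simp
  then have "\<exists>k. rep (Phi i N) = rotate k (phi i ?g)" by (auto simp: Phi_def rot_class_def)
  then show ?thesis using isn canon_rot by blast
qed

lemma Phi_Phi:
  assumes i: "i \<ge> 1" and N: "is_necklace l N"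
  shows "Phi i (Phi i N) = N"
proof -
  let ?g = "canon i (rep N)"
  have r: "necklace_word l (rep N)" using nk_rep[OF N] by simp
  have g: "good i ?g" using good_canon nw_ne[OF r] by blast
  obtain k where k: "rep (Phi i N) = rotate k (phi i ?g)" using Phi_facts[OF i N] by blast
  obtain k' where k': "canon i (rep (Phi i N)) = rotate k' (rep (Phi i N))" using canon_rot by blast
  let ?g' = "canon i (rep (Phi i N))"
  have isn: "is_necklace l (Phi i N)" using Phi_facts[OF i N] by blast
  have g': "good i ?g'" using good_canon nw_ne nk_rep[OF isn] by blast
  have e: "?g' = rotate (k' + k) (phi i ?g)" using k k' by (simp add: rotate_rotate)
  obtain j where j: "phi i ?g' = rotate j (phi i (phi i ?g))"
    using phi_rot[OF good_phi[OF g], of "k' + k"] g' e by auto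
  have "Phi i (Phi i N) = rot_class (rotate j ?g)" using j by (simp add: Phi_def)
  also have "\<dots> = rot_class (rep N)"
  proof -
    obtain k0 where k0: "?g = rotate k0 (rep N)" using canon_rot by blast
    show ?thesis unfolding k0 by (simp add: rc_rotate)
  qed
  also have "\<dots> = N" using nk_rep[OF N] by simp
  finally show ?thesis .
qed

lemma filter_rotate: "length (filter P (rotate k x)) = length (filter P x)"
proof -
  have "length (filter P (rotate k x)) = length (filter P (take (k mod length x) x @ drop (k mod length x) x))"
    unfolding rotate_drop_take[of k x] filter_append length_append by simp
  also have "\<dots> = length (filter P x)" by (simp only: append_take_drop_id)
  finally show ?thesis .
qed

lemma colvec_rotate: "colvec l (rotate k x) = colvec l x"
  by (simp add: colvec_def filter_rotate)

lemma Phi_stats: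
  assumes i: "i \<ge> 1" and N: "is_necklace l N"
  shows "length (rep (Phi i N)) = length (rep N)"
    "colvec l (rep (Phi i N)) = colvec l (rep N)"
    "length (filter barred (rep (Phi i N))) = length (filter barred (rep N))"
    "length (filter (\<lambda>a. absv a = u) (rep (Phi i N))) = length (filter (\<lambda>a. absv a = flip i u) (rep N))"
proof -
  obtain k k' where k: "rep (Phi i N) = rotate k (phi i (canon i (rep N)))"
    and k': "canon i (rep N) = rotate k' (rep N)" using Phi_facts[OF i N] by blast
  show "length (rep (Phi i N)) = length (rep N)" using k k' by simp
  show "colvec l (rep (Phi i N)) = colvec l (rep N)" using k k' by (simp add: colvec_rotate colvec_phi)
  show "length (filter barred (rep (Phi i N))) = length (filter barred (rep N))"
    using k k' by (simp add: filter_rotate barred_phi)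
  show "length (filter (\<lambda>a. absv a = u) (rep (Phi i N))) = length (filter (\<lambda>a. absv a = flip i u) (rep N))"
    using k k' by (simp add: filter_rotate count_phi)
qed



section \<open>Ornaments\<close>

lemma orn_F:
  assumes i: "i \<ge> 1" and O: "ornament l Om"
  shows "ornament l (image_mset (Phi i) Om)"
    "cv_type l (image_mset (Phi i) Om) = cv_type l Om"
    "num_barred (image_mset (Phi i) Om) = num_barred Om"
    "content (image_mset (Phi i) Om) = content Om \<circ> flip i"
    "image_mset (Phi i) (image_mset (Phi i) Om) = Om"
proof -
  have N: "\<And>N. N \<in># Om \<Longrightarrow> is_necklace l N" using O by (simp add: ornament_def)
  show "ornament l (image_mset (Phi i) Om)" using N Phi_facts[OF i] by (auto simp: ornament_def)
  show "cv_type l (image_mset (Phi i) Om) = cv_type l Om"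
    unfolding cv_type_def image_mset.compositionality
    by (rule image_mset_cong) (simp add: Phi_stats[OF i N])
  show "num_barred (image_mset (Phi i) Om) = num_barred Om"
    unfolding num_barred_def image_mset.compositionality
    by (rule arg_cong[where f = sum_mset], rule image_mset_cong) (simp add: Phi_stats[OF i N])
  show "content (image_mset (Phi i) Om) = content Om \<circ> flip i"
  proof
    fix u
    show "content (image_mset (Phi i) Om) u = (content Om \<circ> flip i) u"
      unfolding content_def image_mset.compositionality comp_def
      by (rule arg_cong[where f = sum_mset], rule image_mset_cong) (simp add: Phi_stats[OF i N])
  qed
  have "image_mset (Phi i) (image_mset (Phi i) Om) = image_mset id Om"
    unfolding image_mset.compositionality
    by (rule image_mset_cong) (simp add: Phi_Phi[OF i N])
  then show "image_mset (Phi i) (image_mset (Phi i) Om) = Om" by simp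
qed

lemma Q_flip:
  assumes i: "i \<ge> 1"
  shows "Q_coeff l lam k (\<alpha> \<circ> flip i) = Q_coeff l lam k \<alpha>"
proof -
  define A where "A = (\<lambda>\<beta>. {Om. ornament l Om \<and> cv_type l Om = lam \<and> num_barred Om = k \<and> content Om = \<beta>})"
  define F where "F = image_mset (Phi i)"
  have ff: "(\<beta> \<circ> flip i) \<circ> flip i = \<beta>" for \<beta> :: "nat \<Rightarrow> nat" by (rule ext) simp
  have sub: "F ` A \<beta> \<subseteq> A (\<beta> \<circ> flip i)" for \<beta>
    using orn_F[OF i] by (auto simp: A_def F_def)
  have "A (\<alpha> \<circ> flip i) \<subseteq> F ` A \<alpha>"
  proof
    fix Om assume a: "Om \<in> A (\<alpha> \<circ> flip i)"
    then have "F Om \<in> A \<alpha>" using sub[of "\<alpha> \<circ> flip i"] ff by auto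
    moreover have "F (F Om) = Om" using a orn_F(5)[OF i] by (auto simp: A_def F_def)
    ultimately show "Om \<in> F ` A \<alpha>" by (metis imageI)
  qed
  with sub[of \<alpha>] have e: "F ` A \<alpha> = A (\<alpha> \<circ> flip i)" by blast
  have inj: "inj_on F (A \<alpha>)"
    by (rule inj_on_inverseI[of _ F]) (use orn_F(5)[OF i] in \<open>auto simp: A_def F_def\<close>)
  have "card (A (\<alpha> \<circ> flip i)) = card (A \<alpha>)" using card_image[OF inj] e by simp
  then show ?thesis by (simp add: Q_coeff_def A_def)
qed

lemma Q_zero0:
  assumes "\<alpha> 0 \<noteq> 0" shows "Q_coeff l lam k \<alpha> = 0"
proof -
  have e: "{Om. ornament l Om \<and> cv_type l Om = lam \<and> num_barred Om = k \<and> content Om = \<alpha>} = {}"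
  proof (rule ccontr)
    assume "\<not> ?thesis"
    then obtain Om where Om: "ornament l Om" "content Om = \<alpha>" by auto
    have "content Om 0 = 0" unfolding content_def
    proof (subst sum_mset_0_iff, intro ballI)
      fix x assume "x \<in># image_mset (\<lambda>N. length (filter (\<lambda>a. absv a = 0) (rep N))) Om"
      then obtain N where N: "N \<in># Om" "x = length (filter (\<lambda>a. absv a = 0) (rep N))" by auto
      have "necklace_word l (rep N)" using nk_rep Om(1) N(1) by (auto simp: ornament_def)
      then have "\<forall>a\<in>set (rep N). absv a \<ge> 1" by (auto simp: necklace_word_def valid_letter_def)
      then show "x = 0" using N(2) by (auto simp: filter_empty_conv)
    qed
    then show False using Om assms by simp
  qed
  show ?thesis unfolding Q_coeff_def e by simp
qed

lemma sum_mset_ne: "sum_mset (image_mset f M) \<noteq> (0::nat) \<Longrightarrow> \<exists>x\<in>#M. f x \<noteq> 0"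
  by (induction M) auto

lemma len_filter_ne: "length (filter P xs) \<noteq> 0 \<Longrightarrow> \<exists>a\<in>set xs. P a"
  by (induction xs) (auto split: if_splits)

lemma content_fin: "finite {u. content Om u \<noteq> 0}"
proof -
  have "{u. content Om u \<noteq> 0} \<subseteq> (\<Union>N\<in>set_mset Om. absv ` set (rep N))"
  proof
    fix u assume "u \<in> {u. content Om u \<noteq> 0}"
    then have "sum_mset (image_mset (\<lambda>N. length (filter (\<lambda>a. absv a = u) (rep N))) Om) \<noteq> 0"
      unfolding content_def by simp
    then obtain N where N: "N \<in># Om" "length (filter (\<lambda>a. absv a = u) (rep N)) \<noteq> 0"
      using sum_mset_ne by blast
    then obtain a where "a \<in> set (rep N)" "absv a = u" using len_filter_ne by blast
    then show "u \<in> (\<Union>N\<in>set_mset Om. absv ` set (rep N))" using N(1) by auto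
  qed
  then show ?thesis by (rule finite_subset) simp
qed

lemma Q_zero_inf:
  assumes "infinite {u. \<alpha> u \<noteq> 0}" shows "Q_coeff l lam k \<alpha> = 0"
proof -
  have e: "{Om. ornament l Om \<and> cv_type l Om = lam \<and> num_barred Om = k \<and> content Om = \<alpha>} = {}"
  proof (rule ccontr)
    assume "\<not> ?thesis"
    then obtain Om where "content Om = \<alpha>" by blast
    then show False using content_fin[of Om] assms by simp
  qed
  show ?thesis unfolding Q_coeff_def e by simp
qed


section \<open>From adjacent transpositions to all bijections\<close>

lemma sw_sw: "sw a b (sw a b x) = x"
  by (auto simp: sw_def)

lemma sw_conj: "a + 1 < b \<Longrightarrow> sw a b = sw a (a + 1) \<circ> sw (a + 1) b \<circ> sw a (a + 1)"
  by (rule ext) (auto simp: sw_def)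

lemma sw_same: "sw a a = id"
  by (rule ext) (simp add: sw_def)

lemma Q_sw_d:
  assumes "1 \<le> a"
  shows "Q_coeff l lam k (\<alpha> \<circ> sw a (a + d)) = Q_coeff l lam k \<alpha>"
  using assms
proof (induction d arbitrary: a \<alpha>)
  case 0 then show ?case by (simp add: sw_same)
next
  case (Suc d)
  show ?case
  proof (cases d)
    case 0
    then show ?thesis using Q_flip[OF Suc.prems(1), of l lam k \<alpha>]
      by (simp only: flip_def add_Suc_right add_0_right)
  next
    case (Suc d')
    then have lt: "a + 1 < a + Suc d" by simp
    have e: "a + Suc d = (a + 1) + d" by simp
    have "\<alpha> \<circ> sw a (a + Suc d) = ((\<alpha> \<circ> sw a (a + 1)) \<circ> sw (a + 1) (a + 1 + d)) \<circ> sw a (a + 1)"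
      using sw_conj[OF lt] e by (simp add: comp_assoc)
    then have "Q_coeff l lam k (\<alpha> \<circ> sw a (a + Suc d)) = Q_coeff l lam k ((\<alpha> \<circ> sw a (a + 1)) \<circ> sw (a + 1) (a + 1 + d))"
      using Q_flip[OF Suc.prems(1), of l lam k "(\<alpha> \<circ> sw a (a + 1)) \<circ> sw (a + 1) (a + 1 + d)"]
      by (simp add: flip_def)
    also have "\<dots> = Q_coeff l lam k (\<alpha> \<circ> sw a (a + 1))"
      by (rule Suc.IH) simp
    also have "\<dots> = Q_coeff l lam k \<alpha>"
      using Q_flip[OF Suc.prems(1), of l lam k \<alpha>] by (simp add: flip_def)
    finally show ?thesis .
  qed
qed

lemma sw_comm: "sw a b = sw b a"
  by (rule ext) (auto simp: sw_def)

lemma Q_sw: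
  assumes "1 \<le> a" "1 \<le> b"
  shows "Q_coeff l lam k (\<alpha> \<circ> sw a b) = Q_coeff l lam k \<alpha>"
proof (cases "a \<le> b")
  case True
  then obtain d where "b = a + d" using le_Suc_ex by blast
  then show ?thesis using Q_sw_d[OF assms(1)] by simp
next
  case False
  then obtain d where "a = b + d" using le_Suc_ex[of b a] by auto
  then show ?thesis using Q_sw_d[OF assms(2)] sw_comm[of a b] by simp
qed

lemma bij_sw: "bij (sw a b)"
  by (rule bij_betw_byWitness[of _ "sw a b"]) (auto simp: sw_sw)

lemma Q_perm_ind:
  "\<forall>\<alpha> \<sigma>. bij \<sigma> \<and> \<sigma> 0 = 0 \<and> \<alpha> 0 = 0 \<and> finite {u. \<alpha> (\<sigma> u) \<noteq> 0} \<and>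
      card {u. \<alpha> (\<sigma> u) \<noteq> 0 \<and> \<sigma> u \<noteq> u} = n \<longrightarrow>
      Q_coeff l lam k (\<alpha> \<circ> \<sigma>) = Q_coeff l lam k \<alpha>"
proof (induction n rule: less_induct)
  case (less n)
  show ?case
  proof (intro allI impI)
    fix \<alpha> \<sigma> :: "nat \<Rightarrow> nat"
    assume H: "bij \<sigma> \<and> \<sigma> 0 = 0 \<and> \<alpha> 0 = 0 \<and> finite {u. \<alpha> (\<sigma> u) \<noteq> 0} \<and>
      card {u. \<alpha> (\<sigma> u) \<noteq> 0 \<and> \<sigma> u \<noteq> u} = n"
    then have bij: "bij \<sigma>" and s0: "\<sigma> 0 = 0" and a0: "\<alpha> 0 = 0"
      and fin: "finite {u. \<alpha> (\<sigma> u) \<noteq> 0}" and cn: "card {u. \<alpha> (\<sigma> u) \<noteq> 0 \<and> \<sigma> u \<noteq> u} = n"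
      by auto
    define S where "S = {u. \<alpha> (\<sigma> u) \<noteq> 0 \<and> \<sigma> u \<noteq> u}"
    have finS: "finite S" using fin by (rule finite_subset[rotated]) (auto simp: S_def)
    show "Q_coeff l lam k (\<alpha> \<circ> \<sigma>) = Q_coeff l lam k \<alpha>"
    proof (cases "S = {}")
      case Se: True
      have "\<alpha> \<circ> \<sigma> = \<alpha>"
      proof
        fix x
        show "(\<alpha> \<circ> \<sigma>) x = \<alpha> x"
        proof (cases "\<alpha> (\<sigma> x) = 0")
          case False
          have "x \<notin> S" using Se by simp
          then have "\<sigma> x = x" using False by (simp add: S_def)
          then show ?thesis by simp
        next
          case z: True
          show ?thesis
          proof (rule ccontr)
            assume ne: "(\<alpha> \<circ> \<sigma>) x \<noteq> \<alpha> x"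
            obtain y where y: "x = \<sigma> y" using bij by (metis bij_pointE)
            then have "\<alpha> (\<sigma> y) \<noteq> 0" using ne z by simp
            have "y \<notin> S" using Se by simp
            then have "\<sigma> y = y" using \<open>\<alpha> (\<sigma> y) \<noteq> 0\<close> by (simp add: S_def)
            then show False using y ne z by simp
          qed
        qed
      qed
      then show ?thesis by simp
    next
      case False
      then obtain u where u: "\<alpha> (\<sigma> u) \<noteq> 0" "\<sigma> u \<noteq> u" by (auto simp: S_def)
      define v where "v = \<sigma> u"
      have u0: "u \<noteq> 0"
      proof
        assume "u = 0" then show False using u(2) s0 by simp
      qed
      have v0: "v \<noteq> 0" using u0 bij s0 unfolding v_def by (metis bij_pointE)
      define \<alpha>' where "\<alpha>' = \<alpha> \<circ> sw u v"
      define \<sigma>' where "\<sigma>' = sw u v \<circ> \<sigma>"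
      have comp: "\<alpha>' \<circ> \<sigma>' = \<alpha> \<circ> \<sigma>" by (rule ext) (simp add: \<alpha>'_def \<sigma>'_def sw_sw)
      have bij': "bij \<sigma>'" unfolding \<sigma>'_def using bij bij_sw[of u v] by (rule bij_comp)
      have s0': "\<sigma>' 0 = 0" using s0 u0 v0 by (simp add: \<sigma>'_def sw_def)
      have a0': "\<alpha>' 0 = 0" using a0 u0 v0 by (simp add: \<alpha>'_def sw_def)
      have ac: "\<alpha>' (\<sigma>' x) = \<alpha> (\<sigma> x)" for x by (simp add: \<alpha>'_def \<sigma>'_def sw_sw)
      have fin': "finite {x. \<alpha>' (\<sigma>' x) \<noteq> 0}" using fin by (simp add: ac)
      define S' where "S' = {x. \<alpha>' (\<sigma>' x) \<noteq> 0 \<and> \<sigma>' x \<noteq> x}"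
      have sub: "S' \<subseteq> S - {u}"
      proof
        fix x assume x: "x \<in> S'"
        have ax: "\<alpha> (\<sigma> x) \<noteq> 0" using x by (simp add: S'_def ac)
        have "\<sigma>' u = u" by (simp add: \<sigma>'_def v_def sw_def)
        then have xu: "x \<noteq> u" using x by (auto simp: S'_def)
        have "\<sigma> x \<noteq> x"
        proof
          assume fx: "\<sigma> x = x"
          have "x \<noteq> v"
          proof
            assume "x = v"
            then have "\<sigma> x = \<sigma> u" using fx by (simp add: v_def)
            then have "x = u" using bij by (metis bij_pointE)
            then show False using xu by simp
          qed
          then have "\<sigma>' x = x" using fx xu by (simp add: \<sigma>'_def sw_def)
          then show False using x by (simp add: S'_def)
        qed
        then show "x \<in> S - {u}" using ax xu by (simp add: S_def)
      qed
      have "u \<in> S" using u by (simp add: S_def)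
      then have c1: "card (S - {u}) < card S" using finS by (rule card_Diff1_less[rotated])
      have c2: "card S' \<le> card (S - {u})" using sub finS by (intro card_mono) auto
      have lt: "card S' < n" using c1 c2 cn by (simp add: S_def)
      have "Q_coeff l lam k (\<alpha>' \<circ> \<sigma>') = Q_coeff l lam k \<alpha>'"
        using less.IH[OF lt] bij' s0' a0' fin' unfolding S'_def by blast
      moreover have "Q_coeff l lam k \<alpha>' = Q_coeff l lam k \<alpha>"
        unfolding \<alpha>'_def by (rule Q_sw) (use u0 v0 in auto)
      ultimately show ?thesis using comp by simp
    qed
  qed
qed

theorem theorem2p5:
  fixes l k :: nat and lam :: "(nat \<times> nat list) multiset"
    and \<sigma> :: "nat \<Rightarrow> nat" and \<alpha> :: "nat \<Rightarrow> nat"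
  assumes "l \<ge> 1"
    and "\<forall>p\<in>#lam. fst p \<ge> 1 \<and> length (snd p) = l - 1"
    and "bij \<sigma>" and "\<sigma> 0 = 0"
  shows "Q_coeff l lam k (\<alpha> \<circ> \<sigma>) = Q_coeff l lam k \<alpha>"
proof (cases "\<alpha> 0 = 0")
  case False
  then show ?thesis using Q_zero0[of \<alpha>] Q_zero0[of "\<alpha> \<circ> \<sigma>"] assms(4) by simp
next
  case a0: True
  show ?thesis
  proof (cases "finite {u. \<alpha> (\<sigma> u) \<noteq> 0}")
    case True
    then show ?thesis using Q_perm_ind[where l = l and lam = lam and k = k] assms(3,4) a0 by blast
  next
    case False
    have "{u. \<alpha> u \<noteq> 0} = \<sigma> ` {u. \<alpha> (\<sigma> u) \<noteq> 0}"
      using assms(3) by (auto simp: image_def) (metis bij_pointE)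
    then have "infinite {u. \<alpha> u \<noteq> 0}"
      using False finite_imageD[of \<sigma>] assms(3) by (metis bij_is_inj inj_on_subset subset_UNIV)
    moreover have "infinite {u. (\<alpha> \<circ> \<sigma>) u \<noteq> 0}" using False by simp
    ultimately show ?thesis using Q_zero_inf by metis
  qed
qed


end
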